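(* Let $S\subseteq\mathbb{R}^n\times\mathbb{R}^m$ be convex, let (CP) be bounded and fix $p\in[1,\infty]$. If $\bar S\subseteq S$ is a finite $\epsilon$-solution of (CP), then $\bar S$ is a Hausdorff-type finite $(\|Q\|\epsilon)$-solution of (MOCP), where $\|Q\|=(m^{p-1}+1)^{1/p}$ is the operator norm of $Q$ induced by the $p$-norms (equal to $m$ for $p=\infty$).
   Context: $\|\cdot\|$ is the $p$-norm, $B_\epsilon$ its closed $\epsilon$-ball. (CP): compute $Y=\{y:\exists x,(x,y)\in S\}$; bounded means $Y\subseteq B_K$ for some $K$; a nonempty finite $\bar S\subseteq S$ is a finite $\epsilon$-solution if $Y\subseteq\operatorname{conv}\operatorname{proj}_y[\bar S]+B_\epsilon$. $P(x,y)=(y,-\mathbf{1}^\top y)$, $Qy=(y,-\mathbf{1}^\top y)$, with $\mathbf{1}\in\mathbb{R}^m$ all-ones. (MOCP): minimize $P(x,y)$ w.r.t. $\le_{\mathbb{R}^{m+1}_+}$ over $(x,y)\in S$, upper image $\mathcal{P}=\operatorname{cl}(P[S]+\mathbb{R}^{m+1}_+)$. Hausdorff distance $d_H(A_1,A_2)=\max\{\sup_{a_1\in A_1}\inf_{a_2\in A_2}\|a_1-a_2\|,\sup_{a_2\in A_2}\inf_{a_1\in A_1}\|a_1-a_2\|\}$. A nonempty finite $\bar S\subseteq S$ is a Hausdorff-type finite $\epsilon$-solution of (MOCP) if $d_H(\mathcal{P},\operatorname{conv}P[\bar S]+\mathbb{R}^{m+1}_+)\le\epsilon$. *)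

theory Defs
  imports "HOL-Analysis.Analysis" "HOL-Library.Extended_Real"
begin

definition lpnorm :: "ereal \<Rightarrow> 'i set \<Rightarrow> ('i \<Rightarrow> real) \<Rightarrow> real" where
  "lpnorm p I f =
     (if p = \<infinity> then (if I = {} then 0 else Max ((\<lambda>i. \<bar>f i\<bar>) ` I))
      else (\<Sum>i\<in>I. \<bar>f i\<bar> powr real_of_ereal p) powr (1 / real_of_ereal p))"

definition pnorm :: "ereal \<Rightarrow> real^'k \<Rightarrow> real" where
  "pnorm p x = lpnorm p UNIV (\<lambda>i. x $ i)"

text \<open>p-norm on R^(m+1), represented as (real^'m) \<times> real (last coordinate separate).\<close>
definition pnorm1 :: "ereal \<Rightarrow> (real^'m) \<times> real \<Rightarrow> real" where
  "pnorm1 p z = lpnorm p UNIV (\<lambda>i::'m option. case i of None \<Rightarrow> snd z | Some j \<Rightarrow> fst z $ j)"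

definition pball :: "ereal \<Rightarrow> real \<Rightarrow> (real^'k) set" where
  "pball p e = {z. pnorm p z \<le> e}"

definition msum :: "'a::plus set \<Rightarrow> 'a set \<Rightarrow> 'a set" where
  "msum A B = {a + b | a b. a \<in> A \<and> b \<in> B}"

definition Yset :: "((real^'n) \<times> (real^'m)) set \<Rightarrow> (real^'m) set" where
  "Yset S = {y. \<exists>x. (x, y) \<in> S}"

definition CP_bounded :: "ereal \<Rightarrow> ((real^'n) \<times> (real^'m)) set \<Rightarrow> bool" where
  "CP_bounded p S \<longleftrightarrow> (\<exists>K. Yset S \<subseteq> pball p K)"

definition finite_eps_solution_CP ::
  "ereal \<Rightarrow> ((real^'n) \<times> (real^'m)) set \<Rightarrow> real \<Rightarrow> ((real^'n) \<times> (real^'m)) set \<Rightarrow> bool" where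
  "finite_eps_solution_CP p S e Sb \<longleftrightarrow>
     Sb \<noteq> {} \<and> finite Sb \<and> Sb \<subseteq> S \<and>
     Yset S \<subseteq> msum (convex hull (snd ` Sb)) (pball p e)"

definition Pobj :: "(real^'n) \<times> (real^'m) \<Rightarrow> (real^'m) \<times> real" where
  "Pobj z = (snd z, - (\<Sum>i\<in>UNIV. snd z $ i))"

definition orthant :: "((real^'m) \<times> real) set" where
  "orthant = {z. (\<forall>i. 0 \<le> fst z $ i) \<and> 0 \<le> snd z}"

definition upper_image :: "((real^'n) \<times> (real^'m)) set \<Rightarrow> ((real^'m) \<times> real) set" where
  "upper_image S = closure (msum (Pobj ` S) orthant)"

definition hausdorff_p :: "ereal \<Rightarrow> ((real^'m) \<times> real) set \<Rightarrow> ((real^'m) \<times> real) set \<Rightarrow> ereal" where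
  "hausdorff_p p A B =
     max (SUP a\<in>A. INF b\<in>B. ereal (pnorm1 p (a - b)))
         (SUP b\<in>B. INF a\<in>A. ereal (pnorm1 p (a - b)))"

definition hausdorff_eps_solution_MOCP ::
  "ereal \<Rightarrow> ((real^'n) \<times> (real^'m)) set \<Rightarrow> real \<Rightarrow> ((real^'n) \<times> (real^'m)) set \<Rightarrow> bool" where
  "hausdorff_eps_solution_MOCP p S e Sb \<longleftrightarrow>
     Sb \<noteq> {} \<and> finite Sb \<and> Sb \<subseteq> S \<and>
     hausdorff_p p (upper_image S) (msum (convex hull (Pobj ` Sb)) orthant) \<le> ereal e"

definition Qnorm :: "ereal \<Rightarrow> 'm itself \<Rightarrow> real" where
  "Qnorm p _ = (if p = \<infinity> then real CARD('m)
     else (real CARD('m) powr (real_of_ereal p - 1) + 1) powr (1 / real_of_ereal p))"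

end

theory Submission imports Defs begin

lemma powr_convex0:
  assumes "(q::real) \<ge> 1" shows "convex_on {0..} (\<lambda>x. x powr q)"
proof (rule convex_on_linorderI)
  fix t x y :: real
  assume t: "0 < t" "t < 1" and xy: "x \<in> {0..}" "y \<in> {0..}" "x < y"
  show "((1 - t) *\<^sub>R x + t *\<^sub>R y) powr q \<le> (1 - t) * x powr q + t * y powr q"
  proof (cases "x = 0")
    case True
    have "(t * y) powr q = t powr q * y powr q" using t xy by (simp add: powr_mult)
    also have "t powr q \<le> t powr 1" using t assms by (intro powr_mono') auto
    then have "t powr q * y powr q \<le> t * y powr q" using t by (simp add: mult_right_mono)
    finally show ?thesis using True assms by simp
  next
    case False
    with xy have "x \<in> {0<..}" "y \<in> {0<..}" by auto
    then show ?thesis using convex_onD[OF powr_convex[OF assms], of t x y] t by simp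
  qed
qed (simp add: convex_real_interval)

lemma sum_powr_le:
  fixes z :: "real^'m" and q :: real
  assumes "q \<ge> 1"
  shows "(\<Sum>i\<in>UNIV. \<bar>z $ i\<bar>) powr q \<le> real CARD('m) powr (q - 1) * (\<Sum>i\<in>UNIV. \<bar>z $ i\<bar> powr q)"
proof -
  define m where "m = real CARD('m)"
  have m: "m > 0" unfolding m_def by simp
  have "(\<lambda>x. x powr q) (\<Sum>i\<in>UNIV. (1/m) *\<^sub>R \<bar>z $ i\<bar>) \<le> (\<Sum>i\<in>UNIV. (1/m) * (\<lambda>x. x powr q) \<bar>z $ i\<bar>)"
    by (rule convex_on_sum[OF _ _ powr_convex0[OF assms]]; auto simp: m_def)
  hence j: "((1/m) * (\<Sum>i\<in>UNIV. \<bar>z $ i\<bar>)) powr q \<le> (1/m) * (\<Sum>i\<in>UNIV. \<bar>z $ i\<bar> powr q)"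
    by (simp add: sum_distrib_left)
  have "(\<Sum>i\<in>UNIV. \<bar>z $ i\<bar>) powr q = (m * ((1/m) * (\<Sum>i\<in>UNIV. \<bar>z $ i\<bar>))) powr q"
    using m by simp
  also have "\<dots> = m powr q * ((1/m) * (\<Sum>i\<in>UNIV. \<bar>z $ i\<bar>)) powr q"
    using m by (subst powr_mult) (auto intro: sum_nonneg)
  also have "\<dots> \<le> m powr q * ((1/m) * (\<Sum>i\<in>UNIV. \<bar>z $ i\<bar> powr q))"
    using j m by (intro mult_left_mono) auto
  also have "\<dots> = m powr (q - 1) * (\<Sum>i\<in>UNIV. \<bar>z $ i\<bar> powr q)"
    using m by (simp add: powr_diff)
  finally show ?thesis unfolding m_def .
qed


lemma sum_opt:
  fixes f :: "'m::finite option \<Rightarrow> real"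
  shows "sum f UNIV = f None + (\<Sum>j\<in>UNIV. f (Some j))"
  by (simp add: UNIV_option_conv sum.reindex)

lemma powr_inv_le_iff:
  fixes s K q :: real
  assumes "0 \<le> s" "0 \<le> K" "q > 0"
  shows "s powr (1/q) \<le> K \<longleftrightarrow> s \<le> K powr q"
proof
  assume h: "s powr (1/q) \<le> K"
  have "(s powr (1/q)) powr q \<le> K powr q" using h assms by (intro powr_mono2) auto
  then show "s \<le> K powr q" using assms by (simp add: powr_powr)
next
  assume h: "s \<le> K powr q"
  have "s powr (1/q) \<le> (K powr q) powr (1/q)" using h assms by (intro powr_mono2) auto
  then show "s powr (1/q) \<le> K" using assms by (simp add: powr_powr)
qed

lemma powr_le_cancel_base:
  fixes x y q :: real
  assumes "0 \<le> x" "0 \<le> y" "q > 0" "x powr q \<le> y powr q"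
  shows "x \<le> y"
  using powr_less_mono2[of q y x] assms by force

lemma pnorm1_inf_le_iff:
  fixes w :: "(real^'m) \<times> real"
  shows "pnorm1 \<infinity> w \<le> K \<longleftrightarrow> \<bar>snd w\<bar> \<le> K \<and> (\<forall>j. \<bar>fst w $ j\<bar> \<le> K)"
  unfolding pnorm1_def lpnorm_def
  by (auto simp: UNIV_option_conv)

lemma pnorm_inf_le_iff:
  fixes z :: "real^'m"
  shows "pnorm \<infinity> z \<le> K \<longleftrightarrow> (\<forall>j. \<bar>z $ j\<bar> \<le> K)"
  unfolding pnorm_def lpnorm_def
  by auto

lemma pnorm_inf_ge:
  fixes z :: "real^'m"
  shows "\<bar>z $ j\<bar> \<le> pnorm \<infinity> z"
  using pnorm_inf_le_iff[of z "pnorm \<infinity> z"] by auto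

lemma pnorm1_fin:
  fixes w :: "(real^'m) \<times> real"
  assumes "p \<noteq> \<infinity>"
  shows "pnorm1 p w = (\<bar>snd w\<bar> powr real_of_ereal p + (\<Sum>j\<in>UNIV. \<bar>fst w $ j\<bar> powr real_of_ereal p)) powr (1 / real_of_ereal p)"
  unfolding pnorm1_def lpnorm_def using assms
  by (simp add: sum_opt)

lemma pnorm_fin:
  fixes z :: "real^'m"
  assumes "p \<noteq> \<infinity>"
  shows "pnorm p z = (\<Sum>j\<in>UNIV. \<bar>z $ j\<bar> powr real_of_ereal p) powr (1 / real_of_ereal p)"
  unfolding pnorm_def lpnorm_def using assms by simp

lemma real_p_ge1:
  assumes "1 \<le> p" "p \<noteq> \<infinity>"
  shows "1 \<le> real_of_ereal p"
  using assms by (cases p) auto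

lemma pnorm1_fin_le_iff:
  fixes w :: "(real^'m) \<times> real"
  assumes "1 \<le> p" "p \<noteq> \<infinity>" "0 \<le> K"
  shows "pnorm1 p w \<le> K \<longleftrightarrow> \<bar>snd w\<bar> powr real_of_ereal p + (\<Sum>j\<in>UNIV. \<bar>fst w $ j\<bar> powr real_of_ereal p) \<le> K powr real_of_ereal p"
  unfolding pnorm1_fin[OF assms(2)] using real_p_ge1[OF assms(1,2)] assms(3)
  by (intro powr_inv_le_iff) (auto intro!: sum_nonneg add_nonneg_nonneg)

lemma pnorm_nonneg:
  fixes z :: "real^'m"
  assumes "1 \<le> p"
  shows "0 \<le> pnorm p z"
proof (cases "p = \<infinity>")
  case True
  then show ?thesis using pnorm_inf_ge[of z] by (meson abs_ge_zero order_trans)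
next
  case False
  then show ?thesis by (simp add: pnorm_fin)
qed

lemma pnorm1_zero:
  assumes "1 \<le> p"
  shows "pnorm1 p (0 :: (real^'m) \<times> real) = 0"
proof (cases "p = \<infinity>")
  case True
  then show ?thesis unfolding pnorm1_def lpnorm_def by (simp add: UNIV_option_conv)
next
  case False
  then show ?thesis using real_p_ge1[OF assms False] by (simp add: pnorm1_fin)
qed

lemma pnorm1_bound:
  fixes w :: "(real^'m) \<times> real"
  assumes "1 \<le> p" "0 \<le> K" "pnorm1 p w \<le> K"
  shows "\<bar>snd w\<bar> \<le> K \<and> (\<forall>j. \<bar>fst w $ j\<bar> \<le> K)"
proof (cases "p = \<infinity>")
  case True
  then show ?thesis using assms pnorm1_inf_le_iff by blast
next
  case False
  define q where "q = real_of_ereal p"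
  have q: "q \<ge> 1" using real_p_ge1[OF assms(1) False] q_def by simp
  have h: "\<bar>snd w\<bar> powr q + (\<Sum>j\<in>UNIV. \<bar>fst w $ j\<bar> powr q) \<le> K powr q"
    using pnorm1_fin_le_iff[OF assms(1) False assms(2), of w] assms(3) q_def by simp
  have s: "\<bar>fst w $ j\<bar> powr q \<le> (\<Sum>j\<in>UNIV. \<bar>fst w $ j\<bar> powr q)" for j
    by (rule member_le_sum) auto
  have "\<bar>snd w\<bar> powr q \<le> K powr q" using h sum_nonneg[of UNIV "\<lambda>j. \<bar>fst w $ j\<bar> powr q"] by force
  moreover have "\<bar>fst w $ j\<bar> powr q \<le> K powr q" for j using h s[of j] powr_ge_zero[of "\<bar>snd w\<bar>" q] by linarith
  ultimately show ?thesis using q assms(2) powr_le_cancel_base[of _ K q] by force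
qed


definition Qm :: "real^'m \<Rightarrow> (real^'m) \<times> real" where
  "Qm y = (y, - (\<Sum>i\<in>UNIV. y $ i))"

lemma Pobj_Qm: "Pobj z = Qm (snd z)"
  by (simp add: Pobj_def Qm_def)

lemma linear_Qm: "linear Qm"
  by (rule linearI) (auto simp: Qm_def sum.distrib sum_distrib_left sum_negf)

lemma Q_ineq:
  fixes z :: "real^'m"
  assumes "1 \<le> p"
  shows "pnorm1 p (Qm z) \<le> Qnorm p TYPE('m) * pnorm p z"
proof (cases "p = \<infinity>")
  case True
  define M where "M = pnorm \<infinity> z"
  have M0: "0 \<le> M" unfolding M_def using pnorm_nonneg[of \<infinity> z] by simp
  have c: "\<bar>z $ j\<bar> \<le> M" for j unfolding M_def by (rule pnorm_inf_ge)
  have m1: "1 \<le> real CARD('m)" by simp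
  have "\<bar>\<Sum>i\<in>UNIV. z $ i\<bar> \<le> (\<Sum>i\<in>UNIV. \<bar>z $ i\<bar>)" by (rule sum_abs)
  also have "\<dots> \<le> (\<Sum>i\<in>(UNIV::'m set). M)" by (intro sum_mono c)
  also have "\<dots> = real CARD('m) * M" by simp
  finally have s: "\<bar>\<Sum>i\<in>UNIV. z $ i\<bar> \<le> real CARD('m) * M" .
  have "\<bar>z $ j\<bar> \<le> real CARD('m) * M" for j
    using c[of j] mult_right_mono[OF m1 M0] by simp
  then have "pnorm1 \<infinity> (Qm z) \<le> real CARD('m) * M"
    using s unfolding pnorm1_inf_le_iff Qm_def by simp
  moreover have "Qnorm p TYPE('m) = real CARD('m)" using True by (simp add: Qnorm_def)
  ultimately show ?thesis using True M_def by simp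
next
  case False
  define q where "q = real_of_ereal p"
  have q: "q \<ge> 1" using real_p_ge1[OF assms False] q_def by simp
  define T where "T = (\<Sum>j\<in>UNIV. \<bar>z $ j\<bar> powr q)"
  define m where "m = real CARD('m)"
  have T0: "0 \<le> T" unfolding T_def by (auto intro: sum_nonneg)
  have "\<bar>\<Sum>i\<in>UNIV. z $ i\<bar> powr q \<le> (\<Sum>i\<in>UNIV. \<bar>z $ i\<bar>) powr q"
    using q by (intro powr_mono2 sum_abs) auto
  also have "\<dots> \<le> m powr (q - 1) * T"
    unfolding m_def T_def by (rule sum_powr_le[OF q])
  finally have a: "\<bar>\<Sum>i\<in>UNIV. z $ i\<bar> powr q \<le> m powr (q - 1) * T" .
  have "pnorm1 p (Qm z) = (\<bar>\<Sum>i\<in>UNIV. z $ i\<bar> powr q + T) powr (1/q)"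
    unfolding pnorm1_fin[OF False] q_def T_def by (simp add: Qm_def)
  also have "\<dots> \<le> ((m powr (q - 1) + 1) * T) powr (1/q)"
    using a q T0 by (intro powr_mono2) (auto simp: algebra_simps intro: add_nonneg_nonneg)
  also have "\<dots> = (m powr (q - 1) + 1) powr (1/q) * T powr (1/q)"
    using T0 by (subst powr_mult) auto
  also have "\<dots> = Qnorm p TYPE('m) * pnorm p z"
    unfolding Qnorm_def pnorm_fin[OF False] using False by (simp add: q_def T_def m_def)
  finally show ?thesis .
qed

lemma closed_orthant: "closed (orthant :: ((real^'m) \<times> real) set)"
proof -
  have "orthant = {z::(real^'m) \<times> real. \<forall>i. 0 \<le> fst z $ i} \<inter> {z. 0 \<le> snd z}"
    by (auto simp: orthant_def)
  also have "closed \<dots>"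
    by (intro closed_Int closed_Collect_all closed_Collect_le continuous_intros)
  finally show ?thesis .
qed

lemma compact_ball1:
  assumes "1 \<le> p" "0 \<le> K"
  shows "compact {w :: (real^'m) \<times> real. pnorm1 p w \<le> K}"
proof -
  let ?B = "{w :: (real^'m) \<times> real. pnorm1 p w \<le> K}"
  have "bounded ?B"
  proof (rule boundedI)
    fix w :: "(real^'m) \<times> real" assume "w \<in> ?B"
    then have b: "\<bar>snd w\<bar> \<le> K" "\<And>j. \<bar>fst w $ j\<bar> \<le> K"
      using pnorm1_bound[OF assms, of w] by auto
    have "norm w \<le> norm (fst w) + norm (snd w)"
      using norm_Pair_le[of "fst w" "snd w"] by simp
    also have "norm (fst w) \<le> (\<Sum>j\<in>UNIV. \<bar>fst w $ j\<bar>)" by (rule norm_le_l1_cart)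
    also have "\<dots> \<le> (\<Sum>j\<in>(UNIV::'m set). K)" by (intro sum_mono b)
    finally show "norm w \<le> real CARD('m) * K + K" using b by simp
  qed
  moreover have "closed ?B"
  proof (cases "p = \<infinity>")
    case True
    have "?B = {w. \<bar>snd w\<bar> \<le> K} \<inter> {w. \<forall>j. \<bar>fst w $ j\<bar> \<le> K}"
      using True pnorm1_inf_le_iff by blast
    also have "closed \<dots>"
      by (intro closed_Int closed_Collect_all closed_Collect_le continuous_intros)
    finally show ?thesis .
  next
    case False
    define q where "q = real_of_ereal p"
    have q: "q \<ge> 1" using real_p_ge1[OF assms(1) False] q_def by simp
    have "?B = {w. \<bar>snd w\<bar> powr q + (\<Sum>j\<in>UNIV. \<bar>fst w $ j\<bar> powr q) \<le> K powr q}"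
      using pnorm1_fin_le_iff[OF assms(1) False assms(2)] q_def by auto
    also have "closed \<dots>"
      using q
      by (intro closed_Collect_le continuous_on_add continuous_on_sum continuous_on_const continuous_on_powr'[OF _ continuous_on_const] continuous_on_rabs continuous_on_snd continuous_on_fst continuous_on_id continuous_on_component) auto
    finally show ?thesis .
  qed
  ultimately show ?thesis by (simp add: compact_eq_bounded_closed)
qed


theorem mainTheorem16:
  fixes S Sb :: "((real^'n) \<times> (real^'m)) set" and p :: ereal and e :: real
  assumes "convex S"
    and "1 \<le> p"
    and "CP_bounded p S"
    and "finite_eps_solution_CP p S e Sb"
  shows "hausdorff_eps_solution_MOCP p S (Qnorm p TYPE('m) * e) Sb"
proof -
  have Sb: "Sb \<noteq> {}" "finite Sb" "Sb \<subseteq> S"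
    and Y: "Yset S \<subseteq> msum (convex hull (snd ` Sb)) (pball p e)"
    using assms(4) unfolding finite_eps_solution_CP_def by auto
  have Qn0: "0 \<le> Qnorm p TYPE('m)" unfolding Qnorm_def by auto
  obtain s where s: "s \<in> Sb" using Sb(1) by blast
  have "snd s \<in> Yset S" using s Sb(3) unfolding Yset_def by (cases s) force
  then have "snd s \<in> msum (convex hull (snd ` Sb)) (pball p e)" using Y by blast
  then obtain z :: "real^'m" where "z \<in> pball p e" unfolding msum_def by blast
  then have e0: "0 \<le> e" using pnorm_nonneg[OF assms(2), of z] unfolding pball_def by simp
  define K where "K = Qnorm p TYPE('m) * e"
  have K0: "0 \<le> K" unfolding K_def using Qn0 e0 by simp
  define B where "B = msum (convex hull (Pobj ` Sb)) (orthant :: ((real^'m) \<times> real) set)"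
  have linP: "linear (Pobj :: (real^'n) \<times> (real^'m) \<Rightarrow> _)"
  proof -
    have e: "(Pobj :: (real^'n) \<times> (real^'m) \<Rightarrow> _) = Qm \<circ> (snd :: (real^'n) \<times> (real^'m) \<Rightarrow> real^'m)"
      by (rule ext) (simp add: Pobj_Qm)
    have "linear (Qm \<circ> (snd :: (real^'n) \<times> (real^'m) \<Rightarrow> real^'m))"
      by (rule linear_compose[OF linear_snd linear_Qm])
    then show ?thesis unfolding e .
  qed
  have hullP: "convex hull (Pobj ` Sb) = Pobj ` (convex hull Sb)"
    using convex_hull_linear_image[OF linP] by simp
  have hullS: "convex hull Sb \<subseteq> S" using Sb(3) assms(1) by (simp add: hull_minimal)
  have BA: "B \<subseteq> upper_image S"
  proof -
    have "B \<subseteq> msum (Pobj ` S) orthant"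
      unfolding B_def msum_def hullP using hullS by blast
    then show ?thesis unfolding upper_image_def using closure_subset by blast
  qed
  define Bl where "Bl = {w :: (real^'m) \<times> real. pnorm1 p w \<le> K}"
  define C where "C = msum B Bl"
  have clB: "closed B"
  proof -
    have "compact (convex hull (Pobj ` Sb))"
      using Sb(2) by (intro compact_convex_hull finite_imp_compact) simp
    then have "closed (\<Union>x\<in>convex hull (Pobj ` Sb). \<Union>y\<in>orthant. {x + y})"
      by (intro compact_closed_sums closed_orthant)
    moreover have "(\<Union>x\<in>convex hull (Pobj ` Sb). \<Union>y\<in>orthant. {x + y}) = B"
      unfolding B_def msum_def by blast
    ultimately show ?thesis by simp
  qed
  have clC: "closed C"
  proof -
    have "closed (\<Union>x\<in>B. \<Union>y\<in>Bl. {x + y})"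
      using clB compact_ball1[OF assms(2) K0] unfolding Bl_def by (intro closed_compact_sums)
    moreover have "(\<Union>x\<in>B. \<Union>y\<in>Bl. {x + y}) = C"
      unfolding C_def msum_def by blast
    ultimately show ?thesis by simp
  qed
  have PC: "msum (Pobj ` S) orthant \<subseteq> C"
  proof
    fix a assume "a \<in> msum (Pobj ` S) orthant"
    then obtain xy r where xy: "xy \<in> S" and r: "r \<in> orthant" and a: "a = Pobj xy + r"
      unfolding msum_def by blast
    define y where "y = snd xy"
    have "y \<in> Yset S" using xy unfolding Yset_def y_def by (cases xy) force
    then obtain c z where c: "c \<in> convex hull (snd ` Sb)" and z: "pnorm p z \<le> e" and y: "y = c + z"
      using Y unfolding msum_def pball_def by blast
    have "Qm c \<in> Qm ` (convex hull (snd ` Sb))" using c by blast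
    also have "\<dots> = convex hull (Qm ` snd ` Sb)" by (rule convex_hull_linear_image[OF linear_Qm])
    also have "Qm ` snd ` Sb = Pobj ` Sb" by (auto simp: Pobj_Qm image_image)
    finally have Qc: "Qm c \<in> convex hull (Pobj ` Sb)" .
    have "Qm c + r \<in> B" unfolding B_def msum_def using Qc r by blast
    moreover have "Qm z \<in> Bl"
    proof -
      have "pnorm1 p (Qm z) \<le> Qnorm p TYPE('m) * pnorm p z" by (rule Q_ineq[OF assms(2)])
      also have "\<dots> \<le> K" unfolding K_def using z Qn0 by (intro mult_left_mono) auto
      finally show ?thesis unfolding Bl_def by simp
    qed
    moreover have "a = (Qm c + r) + Qm z"
      using a y linear_add[OF linear_Qm, of c z] by (simp add: Pobj_Qm algebra_simps y_def)
    ultimately show "a \<in> C" unfolding C_def msum_def by blast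
  qed
  have AC: "upper_image S \<subseteq> C"
    unfolding upper_image_def using PC clC by (rule closure_minimal)
  have H1: "(SUP a\<in>upper_image S. INF b\<in>B. ereal (pnorm1 p (a - b))) \<le> ereal K"
  proof (rule SUP_least)
    fix a assume "a \<in> upper_image S"
    then have "a \<in> C" using AC by blast
    then obtain b w where b: "b \<in> B" and w: "w \<in> Bl" and a: "a = b + w"
      unfolding C_def msum_def by blast
    have "pnorm1 p (a - b) \<le> K" using w a unfolding Bl_def by simp
    then show "(INF b\<in>B. ereal (pnorm1 p (a - b))) \<le> ereal K"
      using b by (intro INF_lower2[of b]) auto
  qed
  have H2: "(SUP b\<in>B. INF a\<in>upper_image S. ereal (pnorm1 p (a - b))) \<le> ereal K"
  proof (rule SUP_least)
    fix b assume b: "b \<in> B"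
    then have "b \<in> upper_image S" using BA by blast
    moreover have "pnorm1 p (b - b) = 0" using pnorm1_zero[OF assms(2)] by simp
    ultimately show "(INF a\<in>upper_image S. ereal (pnorm1 p (a - b))) \<le> ereal K"
      using K0 by (intro INF_lower2[of b]) auto
  qed
  show ?thesis
    unfolding hausdorff_eps_solution_MOCP_def hausdorff_p_def
    using Sb H1 H2 by (simp add: B_def K_def)
qed

end
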